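(* Let $m\geq4$ be an integer, let $G$ be an $m$-free digraph, let $v\in V(G)$ and let $k$ be an integer with $1\leq k\leq m-3$. Put $V_1=\bigcup_{i=1}^{k+1}N_i^+(v)$ and $V_2=V(G)\setminus V_1$. Then the set of edges of $G$ from $V_1$ to $V_2$ equals $E(N^+_{k+1}(v),N^+_{k+2}(v))$, so it has exactly $p_k(v)$ elements, and the number of pairs $(a,b)\in V_1\times V_2$ such that neither $(a,b)$ nor $(b,a)$ is an edge is at least $s_k(v)$.
   Context: All digraphs are finite, without loops and without parallel edges. A digraph is $m$-free if it has no directed cycle of length at most $m$. For a vertex $v$ and $i\geq 0$, $N_i^+(v)$ is the set of vertices $u$ such that the shortest directed path from $v$ to $u$ has length exactly $i$. For $A,B\subseteq V(G)$, $E(A,B)$ is the set of edges $(a,b)$ with $a\in A$, $b\in B$. A directed path $(v_0,\dots,v_k)$ consists of distinct vertices with $(v_i,v_{i+1})$ an edge for each $i$; its length is $k$. It is induced if every edge of $G$ with both ends in $\{v_0,\dots,v_k\}$ is one of the edges $(v_i,v_{i+1})$; it is a shortest induced directed path if it is induced and $v_k\in N_k^+(v_0)$. Let $\mathscr{P}(G)$ be the set of shortest induced directed paths of $G$. For an integer $k\geq1$ and $v\in V(G)$: $P_k(v)$ is the set of triples $(x,y,z)$ of vertices for which there exist vertices $w_1,\dots,w_k$ with $(x,w_1,\dots,w_k,y,z)\in\mathscr{P}(G)$ and $x=v$. $P'_k(v)$ (resp. $Q'_k(v)$) is the set of triples $(x,y,z)$ for which there exist $w_1,\dots,w_k$ with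 $(x,y,w_1,\dots,w_k,z)\in\mathscr{P}(G)$ and $x=v$ (resp. $y=v$). $p_k(v)=|P_k(v)|$, $p'_k(v)=|P'_k(v)|$, $q'_k(v)=|Q'_k(v)|$. For $1\leq k\leq m-3$: $s_k(v)=\sum_{i=k}^{m-3}p'_i(v)+\sum_{i=1}^{k}q'_i(v)$. *)

theory Defs
  imports Main
begin

definition digraph :: "'a set \<Rightarrow> ('a \<times> 'a) set \<Rightarrow> bool" where
  "digraph V E \<longleftrightarrow> finite V \<and> E \<subseteq> V \<times> V \<and> (\<forall>x. (x, x) \<notin> E)"

text \<open>Directed cycle given by the list of its distinct vertices v0 ... v(l-1); its length is l.\<close>
definition dicycle :: "('a \<times> 'a) set \<Rightarrow> 'a list \<Rightarrow> bool" where
  "dicycle E xs \<longleftrightarrow> xs \<noteq> [] \<and> distinct xs \<and>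
     (\<forall>i. i + 1 < length xs \<longrightarrow> (xs ! i, xs ! (i + 1)) \<in> E) \<and> (last xs, hd xs) \<in> E"

definition m_free :: "nat \<Rightarrow> ('a \<times> 'a) set \<Rightarrow> bool" where
  "m_free m E \<longleftrightarrow> (\<forall>xs. dicycle E xs \<longrightarrow> length xs > m)"

definition outN :: "'a set \<Rightarrow> ('a \<times> 'a) set \<Rightarrow> nat \<Rightarrow> 'a \<Rightarrow> 'a set" where
  "outN V E i v = {u \<in> V. (v, u) \<in> E ^^ i \<and> (\<forall>j<i. (v, u) \<notin> E ^^ j)}"

definition edges_between :: "('a \<times> 'a) set \<Rightarrow> 'a set \<Rightarrow> 'a set \<Rightarrow> ('a \<times> 'a) set" where
  "edges_between E A B = {(a, b) \<in> E. a \<in> A \<and> b \<in> B}"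

text \<open>Directed path (v0,...,vk) as a nonempty list of distinct vertices; its length is k.\<close>
definition dipath :: "('a \<times> 'a) set \<Rightarrow> 'a list \<Rightarrow> bool" where
  "dipath E xs \<longleftrightarrow> xs \<noteq> [] \<and> distinct xs \<and>
     (\<forall>i. i + 1 < length xs \<longrightarrow> (xs ! i, xs ! (i + 1)) \<in> E)"

definition induced_dipath :: "('a \<times> 'a) set \<Rightarrow> 'a list \<Rightarrow> bool" where
  "induced_dipath E xs \<longleftrightarrow> dipath E xs \<and>
     (\<forall>i j. i < length xs \<longrightarrow> j < length xs \<longrightarrow> (xs ! i, xs ! j) \<in> E \<longrightarrow> j = i + 1)"

definition sip :: "'a set \<Rightarrow> ('a \<times> 'a) set \<Rightarrow> 'a list \<Rightarrow> bool" where
  "sip V E xs \<longleftrightarrow> induced_dipath E xs \<and> last xs \<in> outN V E (length xs - 1) (hd xs)"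

definition P_set :: "'a set \<Rightarrow> ('a \<times> 'a) set \<Rightarrow> nat \<Rightarrow> 'a \<Rightarrow> ('a \<times> 'a \<times> 'a) set" where
  "P_set V E k v = {(x, y, z). \<exists>ws. length ws = k \<and> sip V E (x # ws @ [y, z]) \<and> x = v}"

definition P'_set :: "'a set \<Rightarrow> ('a \<times> 'a) set \<Rightarrow> nat \<Rightarrow> 'a \<Rightarrow> ('a \<times> 'a \<times> 'a) set" where
  "P'_set V E k v = {(x, y, z). \<exists>ws. length ws = k \<and> sip V E (x # y # ws @ [z]) \<and> x = v}"

definition Q'_set :: "'a set \<Rightarrow> ('a \<times> 'a) set \<Rightarrow> nat \<Rightarrow> 'a \<Rightarrow> ('a \<times> 'a \<times> 'a) set" where
  "Q'_set V E k v = {(x, y, z). \<exists>ws. length ws = k \<and> sip V E (x # y # ws @ [z]) \<and> y = v}"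

definition p_num :: "'a set \<Rightarrow> ('a \<times> 'a) set \<Rightarrow> nat \<Rightarrow> 'a \<Rightarrow> nat" where
  "p_num V E k v = card (P_set V E k v)"

definition p'_num :: "'a set \<Rightarrow> ('a \<times> 'a) set \<Rightarrow> nat \<Rightarrow> 'a \<Rightarrow> nat" where
  "p'_num V E k v = card (P'_set V E k v)"

definition q'_num :: "'a set \<Rightarrow> ('a \<times> 'a) set \<Rightarrow> nat \<Rightarrow> 'a \<Rightarrow> nat" where
  "q'_num V E k v = card (Q'_set V E k v)"

definition s_num :: "nat \<Rightarrow> 'a set \<Rightarrow> ('a \<times> 'a) set \<Rightarrow> nat \<Rightarrow> 'a \<Rightarrow> nat" where
  "s_num m V E k v = (\<Sum>i = k..m - 3. p'_num V E i v) + (\<Sum>i = 1..k. q'_num V E i v)"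

end

theory Submission
  imports Defs
begin

lemma outN_iff: "u \<in> outN V E i v \<longleftrightarrow> u \<in> V \<and> (v, u) \<in> E ^^ i \<and> (\<forall>j<i. (v, u) \<notin> E ^^ j)"
  unfolding outN_def by auto

lemma outN_unique: "u \<in> outN V E i v \<Longrightarrow> u \<in> outN V E j v \<Longrightarrow> i = j"
  unfolding outN_def by (metis (lifting) linorder_neqE_nat mem_Collect_eq)

lemma outN_exists:
  assumes "u \<in> V" "(v, u) \<in> E ^^ n"
  shows "\<exists>d\<le>n. u \<in> outN V E d v"
proof -
  define d where "d = (LEAST j. (v, u) \<in> E ^^ j)"
  have "(v,u) \<in> E ^^ d" unfolding d_def by (rule LeastI[where P="\<lambda>j. (v, u) \<in> E ^^ j", OF assms(2)])
  moreover have "d \<le> n" unfolding d_def by (rule Least_le[where P="\<lambda>j. (v, u) \<in> E ^^ j", OF assms(2)])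
  moreover have "\<forall>j<d. (v,u) \<notin> E ^^ j" unfolding d_def using not_less_Least by blast
  ultimately show ?thesis using assms(1) by (auto simp: outN_iff)
qed

lemma walk_seg:
  assumes "\<forall>i<n. (f i, f (Suc i)) \<in> E" "p \<le> q" "q \<le> n"
  shows "(f p, f q) \<in> E ^^ (q - p)"
proof -
  have "(f (p + 0), f (p + (q - p))) \<in> E ^^ (q - p)"
    unfolding relpow_fun_conv
    by (rule exI[of _ "\<lambda>i. f (p + i)"]) (use assms in auto)
  then show ?thesis using assms by simp
qed

lemma relpow_comp: "(a,b) \<in> E ^^ i \<Longrightarrow> (b,c) \<in> E ^^ j \<Longrightarrow> (a,c) \<in> E ^^ (i + j)"
  by (auto simp: relpow_add)

lemma no_short_cycle:
  assumes mf: "m_free m E" and "(a,a) \<in> E ^^ n" "1 \<le> n" "n \<le> m"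
  shows False
proof -
  define P where "P = (\<lambda>n. 1 \<le> n \<and> (\<exists>b. (b,b) \<in> E ^^ n))"
  have Pn: "P n" using assms unfolding P_def by blast
  define n0 where "n0 = (LEAST n. P n)"
  have P0: "P n0" unfolding n0_def by (rule LeastI[where P=P, OF Pn])
  have n0le: "n0 \<le> n" unfolding n0_def by (rule Least_le[where P=P, OF Pn])
  have min: "\<And>j. j < n0 \<Longrightarrow> \<not> P j" unfolding n0_def using not_less_Least by blast
  from P0 obtain b where n01: "1 \<le> n0" and "(b,b) \<in> E ^^ n0" unfolding P_def by blast
  then obtain f where f0: "f 0 = b" and fn: "f n0 = b" and fe: "\<forall>i<n0. (f i, f (Suc i)) \<in> E"
    unfolding relpow_fun_conv by blast
  define xs where "xs = map f [0..<n0]"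
  have dist: "distinct xs"
    unfolding xs_def distinct_conv_nth
  proof (intro allI impI)
    fix p q assume "p < length (map f [0..<n0])" "q < length (map f [0..<n0])" "p \<noteq> q"
    then have pq: "p < n0" "q < n0" "p \<noteq> q" by auto
    show "map f [0..<n0] ! p \<noteq> map f [0..<n0] ! q"
    proof
      assume "map f [0..<n0] ! p = map f [0..<n0] ! q"
      then have eq: "f p = f q" using pq by simp
      { fix p q assume "p < q" "q < n0" "f p = f q"
        then have "(f p, f p) \<in> E ^^ (q - p)" using walk_seg[OF fe, of p q] by auto
        then have "P (q - p)" using \<open>p < q\<close> unfolding P_def by auto
        then have False using min[of "q-p"] \<open>q < n0\<close> by auto }
      then show False using pq eq by (metis linorder_neqE_nat)
    qed
  qed
  have "dicycle E xs"
    unfolding dicycle_def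
  proof (intro conjI allI impI)
    show "xs \<noteq> []" using n01 unfolding xs_def by auto
    show "distinct xs" by (rule dist)
    fix i assume "i + 1 < length xs"
    then show "(xs ! i, xs ! (i + 1)) \<in> E" using fe unfolding xs_def by auto
  next
    have "last xs = f (n0 - 1)" using n01 unfolding xs_def by (simp add: last_map)
    moreover have "hd xs = f n0" using n01 f0 fn unfolding xs_def by (simp add: hd_map)
    ultimately show "(last xs, hd xs) \<in> E" using fe n01
      by (metis Suc_pred' diff_less less_numeral_extra(1) order_less_le_trans)
  qed
  then have "length xs > m" using mf unfolding m_free_def by blast
  then show False using n0le assms(4) unfolding xs_def by simp
qed

lemma walk_sip:
  assumes mf: "m_free m E" and f0: "f 0 = v"
    and fe: "\<forall>i<n. (f i, f (Suc i)) \<in> E" and fn: "f n \<in> outN V E n v" and nm: "n + 1 \<le> m"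
  shows "sip V E (map f [0..<Suc n])"
proof -
  have fp: "(v, f p) \<in> E ^^ p" if "p \<le> n" for p using walk_seg[OF fe, of 0 p] that f0 by simp
  have fq: "(f q, f n) \<in> E ^^ (n - q)" if "q \<le> n" for q using walk_seg[OF fe, of q n] that by simp
  have short: False if "(v, f n) \<in> E ^^ j" "j < n" for j using fn that unfolding outN_iff by blast
  have chord: "q = Suc p" if "p \<le> n" "q \<le> n" "(f p, f q) \<in> E" for p q
  proof (rule ccontr)
    assume ne: "q \<noteq> Suc p"
    show False
    proof (cases "q \<le> p")
      case True
      have "(f q, f p) \<in> E ^^ (p - q)" using walk_seg[OF fe True \<open>p \<le> n\<close>] .
      then have "(f q, f q) \<in> E ^^ Suc (p - q)" using that(3) by (rule relpow_Suc_I)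
      moreover have "Suc (p - q) \<le> m" using True that nm by arith
      ultimately show False using no_short_cycle[OF mf, of "f q" "Suc (p - q)"] by auto
    next
      case False
      have "(f p, f q) \<in> E ^^ 1" using that(3) by simp
      then have "(v, f n) \<in> E ^^ (p + 1 + (n - q))"
        using relpow_comp[OF relpow_comp[OF fp[OF that(1)]] fq[OF that(2)]] by blast
      moreover have "p + 1 + (n - q) < n" using False ne that by arith
      ultimately show False by (rule short)
    qed
  qed
  have dist: "f p \<noteq> f q" if "p < q" "q \<le> n" for p q
  proof
    assume eq: "f p = f q"
    have "(v, f p) \<in> E ^^ p" using fp that by simp
    then have "(v, f q) \<in> E ^^ p" using eq by simp
    from relpow_comp[OF this fq[OF that(2)]] have "(v, f n) \<in> E ^^ (p + (n - q))" .
    moreover have "p + (n - q) < n" using that by arith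
    ultimately show False by (rule short)
  qed
  let ?xs = "map f [0..<Suc n]"
  have "distinct ?xs" unfolding distinct_conv_nth
    using dist by (auto simp del: upt_Suc) (metis linorder_neqE_nat less_Suc_eq_le)
  moreover have "induced_dipath E ?xs"
    unfolding induced_dipath_def dipath_def
    using calculation fe chord by (auto simp del: upt_Suc)
  moreover have "last ?xs = f n" by simp
  moreover have "hd ?xs = v" using f0 by (simp del: upt_Suc add: hd_map)
  ultimately show ?thesis unfolding sip_def using fn by simp
qed

lemma dipath_seg:
  assumes "dipath E xs" "p \<le> q" "q < length xs"
  shows "(xs ! p, xs ! q) \<in> E ^^ (q - p)"
proof -
  have "\<forall>i<length xs - 1. (xs ! i, xs ! Suc i) \<in> E" using assms(1) unfolding dipath_def by auto
  from walk_seg[OF this, of p q] assms show ?thesis by auto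
qed

lemma sip_outN:
  assumes dg: "digraph V E" and s: "sip V E xs" and p: "p < length xs"
  shows "xs ! p \<in> outN V E p (hd xs)"
proof -
  have dp: "dipath E xs" using s unfolding sip_def induced_dipath_def by auto
  have ne: "xs \<noteq> []" using dp unfolding dipath_def by auto
  have lastN: "last xs \<in> outN V E (length xs - 1) (hd xs)" using s unfolding sip_def by auto
  have hd0: "hd xs = xs ! 0" using ne by (simp add: hd_conv_nth)
  have last': "last xs = xs ! (length xs - 1)" using ne by (simp add: last_conv_nth)
  have inV: "xs ! p \<in> V"
  proof (cases "p = length xs - 1")
    case True then show ?thesis using lastN last' by (simp add: outN_iff)
  next
    case False
    then have "(xs ! p, xs ! (p + 1)) \<in> E" using dp p unfolding dipath_def by auto
    then show ?thesis using dg unfolding digraph_def by auto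
  qed
  have a: "(hd xs, xs ! p) \<in> E ^^ p" using dipath_seg[OF dp, of 0 p] p hd0 by simp
  have b: "(xs ! p, last xs) \<in> E ^^ (length xs - 1 - p)" using dipath_seg[OF dp, of p "length xs - 1"] p last' by simp
  have "(hd xs, xs ! p) \<notin> E ^^ j" if "j < p" for j
  proof
    assume "(hd xs, xs ! p) \<in> E ^^ j"
    from relpow_comp[OF this b] have "(hd xs, last xs) \<in> E ^^ (j + (length xs - 1 - p))" .
    moreover have "j + (length xs - 1 - p) < length xs - 1" using that p by arith
    ultimately show False using lastN unfolding outN_iff by blast
  qed
  then show ?thesis using inV a by (simp add: outN_iff)
qed

lemma v_notin: "i \<ge> 1 \<Longrightarrow> v \<notin> outN V E i v"
proof
  assume "i \<ge> 1" "v \<in> outN V E i v"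
  then have "(v,v) \<notin> E ^^ 0" unfolding outN_iff by auto
  then show False by simp
qed

lemma part1:
  assumes dg: "digraph V E" and mf: "m_free m E" and m4: "m \<ge> 4" and k: "1 \<le> k" "k \<le> m - 3"
    and V1: "V1 = (\<Union>i\<in>{1..k + 1}. outN V E i v)" and V2: "V2 = V - V1"
  shows "edges_between E V1 V2 = edges_between E (outN V E (k + 1) v) (outN V E (k + 2) v)"
proof (rule set_eqI, rule iffI)
  fix e assume "e \<in> edges_between E V1 V2"
  then obtain a b where e: "e = (a,b)" and ab: "(a,b) \<in> E" and a: "a \<in> V1" and b: "b \<in> V" "b \<notin> V1"
    unfolding edges_between_def V2 by auto
  from a obtain i where i: "1 \<le> i" "i \<le> k + 1" and ai: "a \<in> outN V E i v" unfolding V1 by auto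
  have "(v, a) \<in> E ^^ i" using ai by (simp add: outN_iff)
  then have vb: "(v, b) \<in> E ^^ Suc i" using ab by (rule relpow_Suc_I)
  obtain d where d: "d \<le> Suc i" "b \<in> outN V E d v" using outN_exists[OF b(1) vb] by blast
  have "d \<noteq> 0"
  proof
    assume "d = 0"
    then have "b = v" using d by (simp add: outN_iff)
    moreover have "Suc i \<le> m" using i k m4 by arith
    ultimately show False using no_short_cycle[OF mf, of v "Suc i"] vb by auto
  qed
  moreover have "\<not> d \<le> k + 1" using b d unfolding V1 using \<open>d \<noteq> 0\<close> by auto
  ultimately have "d = k + 2" "i = k + 1" using d i by auto
  then show "e \<in> edges_between E (outN V E (k + 1) v) (outN V E (k + 2) v)"
    using e ab ai d by (auto simp: edges_between_def)
next
  fix e assume "e \<in> edges_between E (outN V E (k + 1) v) (outN V E (k + 2) v)"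
  then obtain a b where e: "e = (a,b)" and ab: "(a,b) \<in> E" and a: "a \<in> outN V E (k + 1) v"
    and b: "b \<in> outN V E (k + 2) v"
    unfolding edges_between_def by auto
  have "a \<in> V1" using a unfolding V1 by auto
  moreover have "b \<notin> V1" using b outN_unique[OF b] unfolding V1 by fastforce
  moreover have "b \<in> V" using b by (simp add: outN_iff)
  ultimately show "e \<in> edges_between E V1 V2" using e ab unfolding edges_between_def V2 by auto
qed

lemma part2:
  assumes dg: "digraph V E" and mf: "m_free m E" and m4: "m \<ge> 4" and k: "1 \<le> k" "k \<le> m - 3"
  shows "P_set V E k v = (\<lambda>(y,z). (v,y,z)) ` edges_between E (outN V E (k + 1) v) (outN V E (k + 2) v)"
proof (rule set_eqI, rule iffI)
  fix t assume "t \<in> P_set V E k v"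
  then obtain y z ws where t: "t = (v,y,z)" and ws: "length ws = k" and s: "sip V E (v # ws @ [y, z])"
    unfolding P_set_def by auto
  let ?xs = "v # ws @ [y, z]"
  have dp: "dipath E ?xs" using s unfolding sip_def induced_dipath_def by auto
  have "?xs ! (k+1) \<in> outN V E (k+1) (hd ?xs)" by (rule sip_outN[OF dg s]) (use ws in simp)
  then have y: "y \<in> outN V E (k+1) v" using ws by (simp add: nth_append)
  have "?xs ! (k+2) \<in> outN V E (k+2) (hd ?xs)" by (rule sip_outN[OF dg s]) (use ws in simp)
  then have z: "z \<in> outN V E (k+2) v" using ws by (simp add: nth_append)
  have A: "\<forall>i. i + 1 < length ?xs \<longrightarrow> (?xs ! i, ?xs ! (i + 1)) \<in> E" using dp unfolding dipath_def by blast
  have "(y,z) \<in> E" using A[rule_format, of "k+1"] ws by (simp add: nth_append)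
  then show "t \<in> (\<lambda>(y,z). (v,y,z)) ` edges_between E (outN V E (k + 1) v) (outN V E (k + 2) v)"
    using t y z unfolding edges_between_def by auto
next
  fix t assume "t \<in> (\<lambda>(y,z). (v,y,z)) ` edges_between E (outN V E (k + 1) v) (outN V E (k + 2) v)"
  then obtain y z where t: "t = (v,y,z)" and yz: "(y,z) \<in> E" and y: "y \<in> outN V E (k + 1) v"
    and z: "z \<in> outN V E (k + 2) v" unfolding edges_between_def by auto
  have "(v, y) \<in> E ^^ (k+1)" using y by (simp add: outN_iff)
  then obtain f where f0: "f 0 = v" and fn: "f (k+1) = y" and fe: "\<forall>i<k+1. (f i, f (Suc i)) \<in> E"
    unfolding relpow_fun_conv by blast
  define g where "g = f(Suc (k+1) := z)"
  have g0: "g 0 = v" using f0 unfolding g_def by simp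
  have ge: "\<forall>i<k+2. (g i, g (Suc i)) \<in> E"
  proof (intro allI impI)
    fix i assume "i < k + 2"
    then consider "i < k + 1" | "i = k + 1" by linarith
    then show "(g i, g (Suc i)) \<in> E"
      by cases (use fe fn yz in \<open>auto simp: g_def\<close>)
  qed
  have gn: "g (k+2) \<in> outN V E (k+2) v" using z unfolding g_def by simp
  have "sip V E (map g [0..<Suc (k+2)])"
    by (rule walk_sip[OF mf g0 ge gn]) (use k m4 in arith)
  moreover have "map g [0..<Suc (k+2)] = v # map g [1..<k+1] @ [y, z]"
  proof -
    have I: "[0..<Suc (k+2)] = 0 # [1..<k+1] @ [k+1, k+2]"
    proof -
      have "[0..<Suc (k+2)] = [0..<Suc k] @ [k+1, k+2]" by simp
      moreover have "[0..<Suc k] = 0 # [1..<k+1]" by (simp add: upt_conv_Cons del: upt_Suc)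
      ultimately show ?thesis by simp
    qed
    have "g (k+1) = y" "g (k+2) = z" using fn unfolding g_def by auto
    then show ?thesis unfolding I using g0 by (simp del: upt_Suc)
  qed
  ultimately have "sip V E (v # map g [1..<k+1] @ [y, z])" by (simp only:)
  then show "t \<in> P_set V E k v" unfolding P_set_def t
    by (intro CollectI, simp, intro exI[of _ "map g [1..<k+1]"]) simp
qed

lemma P'_mem:
  assumes dg: "digraph V E" and mf: "m_free m E" and m4: "m \<ge> 4" and k: "1 \<le> k" "k \<le> m - 3"
    and V1: "V1 = (\<Union>i\<in>{1..k + 1}. outN V E i v)" and V2: "V2 = V - V1"
    and i: "k \<le> i" "i \<le> m - 3" and t: "(x, y, z) \<in> P'_set V E i v"
  shows "x = v \<and> y \<in> outN V E 1 v \<and> z \<in> outN V E (i + 2) v \<and> y \<in> V1 \<and> z \<in> V2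
     \<and> (y, z) \<notin> E \<and> (z, y) \<notin> E"
proof -
  obtain ws where ws: "length ws = i" and s: "sip V E (x # y # ws @ [z])" and xv: "x = v"
    using t unfolding P'_set_def by auto
  let ?xs = "x # y # ws @ [z]"
  have dp: "dipath E ?xs" using s unfolding sip_def induced_dipath_def by auto
  have I: "\<forall>a b. a < length ?xs \<longrightarrow> b < length ?xs \<longrightarrow> (?xs ! a, ?xs ! b) \<in> E \<longrightarrow> b = a + 1"
    using s unfolding sip_def induced_dipath_def by blast
  have "?xs ! 1 \<in> outN V E 1 (hd ?xs)" by (rule sip_outN[OF dg s]) simp
  then have y: "y \<in> outN V E 1 v" using xv by simp
  have "?xs ! (i+2) \<in> outN V E (i+2) (hd ?xs)" by (rule sip_outN[OF dg s]) (use ws in simp)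
  then have z: "z \<in> outN V E (i+2) v" using ws xv by (simp add: nth_append)
  have yV1: "y \<in> V1" using y unfolding V1 by auto
  have "z \<notin> V1" using outN_unique[OF z] i unfolding V1 by fastforce
  then have zV2: "z \<in> V2" using z unfolding V2 by (simp add: outN_iff)
  have n1: "(y, z) \<notin> E" using I[rule_format, of 1 "i+2"] ws k i by (simp add: nth_append) blast
  have "(?xs ! 1, ?xs ! (i+2)) \<in> E ^^ (i + 2 - 1)" by (rule dipath_seg[OF dp]) (use ws in simp_all)
  then have yz: "(y, z) \<in> E ^^ Suc i" using ws by (simp add: nth_append)
  have n2: "(z, y) \<notin> E"
  proof
    assume "(z, y) \<in> E"
    with yz have "(y, y) \<in> E ^^ Suc (Suc i)" by (rule relpow_Suc_I)
    moreover have "Suc (Suc i) \<le> m" using i m4 by arith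
    ultimately show False using no_short_cycle[OF mf, of y "Suc (Suc i)"] by auto
  qed
  show ?thesis using xv y z yV1 zV2 n1 n2 by blast
qed

lemma Q'_mem:
  assumes dg: "digraph V E" and mf: "m_free m E" and m4: "m \<ge> 4" and k: "1 \<le> k" "k \<le> m - 3"
    and V1: "V1 = (\<Union>i\<in>{1..k + 1}. outN V E i v)" and V2: "V2 = V - V1"
    and i: "1 \<le> i" "i \<le> k" and t: "(x, y, z) \<in> Q'_set V E i v"
  shows "y = v \<and> z \<in> outN V E (i + 1) v \<and> z \<in> V1 \<and> x \<in> V2
     \<and> (z, x) \<notin> E \<and> (x, z) \<notin> E"
proof -
  obtain ws where ws: "length ws = i" and s: "sip V E (x # y # ws @ [z])" and yv: "y = v"
    using t unfolding Q'_set_def by auto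
  let ?xs = "x # y # ws @ [z]"
  have dp: "dipath E ?xs" using s unfolding sip_def induced_dipath_def by auto
  have I: "\<forall>a b. a < length ?xs \<longrightarrow> b < length ?xs \<longrightarrow> (?xs ! a, ?xs ! b) \<in> E \<longrightarrow> b = a + 1"
    using s unfolding sip_def induced_dipath_def by blast
  have "?xs ! 0 \<in> outN V E 0 (hd ?xs)" by (rule sip_outN[OF dg s]) simp
  then have xV: "x \<in> V" by (simp add: outN_iff)
  have "?xs ! (i+2) \<in> outN V E (i+2) (hd ?xs)" by (rule sip_outN[OF dg s]) (use ws in simp)
  then have zx: "z \<in> outN V E (i+2) x" using ws by (simp add: nth_append)
  have "(?xs ! 0, ?xs ! 1) \<in> E ^^ (1 - 0)" by (rule dipath_seg[OF dp]) simp_all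
  then have xv: "(x, v) \<in> E" using yv by simp
  have "(?xs ! 1, ?xs ! (i+2)) \<in> E ^^ (i + 2 - 1)" by (rule dipath_seg[OF dp]) (use ws in simp_all)
  then have vz: "(v, z) \<in> E ^^ Suc i" using ws yv by (simp add: nth_append)
  have "(v, z) \<notin> E ^^ j" if "j < Suc i" for j
  proof
    assume "(v, z) \<in> E ^^ j"
    with xv have "(x, z) \<in> E ^^ Suc j" by (rule relpow_Suc_I2)
    moreover have "Suc j < i + 2" using that by simp
    ultimately show False using zx unfolding outN_iff by blast
  qed
  then have z: "z \<in> outN V E (i + 1) v" using vz zx by (simp add: outN_iff)
  have zV1: "z \<in> V1" using z i unfolding V1 by auto
  have "x \<notin> V1"
  proof
    assume "x \<in> V1"
    then obtain j where j: "1 \<le> j" "j \<le> k + 1" "x \<in> outN V E j v" unfolding V1 by auto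
    then have "(v, x) \<in> E ^^ j" by (simp add: outN_iff)
    from this xv have "(v, v) \<in> E ^^ Suc j" by (rule relpow_Suc_I)
    moreover have "Suc j \<le> m" using j k m4 by arith
    ultimately show False using no_short_cycle[OF mf, of v "Suc j"] by auto
  qed
  then have xV2: "x \<in> V2" using xV unfolding V2 by simp
  have n1: "(x, z) \<notin> E" using I[rule_format, of 0 "i+2"] ws by (simp add: nth_append) blast
  have "(?xs ! 0, ?xs ! (i+2)) \<in> E ^^ (i + 2 - 0)" by (rule dipath_seg[OF dp]) (use ws in simp_all)
  then have xz: "(x, z) \<in> E ^^ Suc (Suc i)" using ws by (simp add: nth_append)
  have n2: "(z, x) \<notin> E"
  proof
    assume "(z, x) \<in> E"
    with xz have "(x, x) \<in> E ^^ Suc (Suc (Suc i))" by (rule relpow_Suc_I)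
    moreover have "Suc (Suc (Suc i)) \<le> m" using i k m4 by arith
    ultimately show False using no_short_cycle[OF mf, of x "Suc (Suc (Suc i))"] by auto
  qed
  show ?thesis using yv z zV1 xV2 n1 n2 by blast
qed

theorem mainTheorem7:
  fixes V :: "'a set" and E :: "('a \<times> 'a) set" and m k :: nat and v :: 'a
  assumes "m \<ge> 4" and "digraph V E" and "m_free m E" and "v \<in> V"
    and "1 \<le> k" and "k \<le> m - 3"
  defines "V1 \<equiv> (\<Union>i\<in>{1..k + 1}. outN V E i v)"
  defines "V2 \<equiv> V - V1"
  shows "edges_between E V1 V2 = edges_between E (outN V E (k + 1) v) (outN V E (k + 2) v)
    \<and> card (edges_between E V1 V2) = p_num V E k v
    \<and> card {(a, b). a \<in> V1 \<and> b \<in> V2 \<and> (a, b) \<notin> E \<and> (b, a) \<notin> E} \<ge> s_num m V E k v"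
proof -
  note m4 = assms(1) and dg = assms(2) and mf = assms(3) and k = assms(5,6)
  have V1: "V1 = (\<Union>i\<in>{1..k + 1}. outN V E i v)" and V2: "V2 = V - V1" unfolding V1_def V2_def by auto
  have finV: "finite V" using dg unfolding digraph_def by auto
  have V1V: "V1 \<subseteq> V" unfolding V1 outN_def by auto
  have e1: "edges_between E V1 V2 = edges_between E (outN V E (k + 1) v) (outN V E (k + 2) v)"
    by (rule part1[OF dg mf m4 k V1 V2])
  have inj1: "inj_on (\<lambda>(y,z). (v,y,z)) X" for X by (auto simp: inj_on_def)
  have e2: "card (edges_between E V1 V2) = p_num V E k v"
    unfolding p_num_def part2[OF dg mf m4 k] e1 by (rule card_image[OF inj1, symmetric])
  define T where "T = {(a, b). a \<in> V1 \<and> b \<in> V2 \<and> (a, b) \<notin> E \<and> (b, a) \<notin> E}"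
  have finT: "finite T"
    by (rule finite_subset[of _ "V \<times> V"]) (use V1V finV in \<open>auto simp: T_def V2\<close>)
  define A where "A i = (\<lambda>(x,y,z). (y,z)) ` P'_set V E i v" for i
  define B where "B i = (\<lambda>(x,y,z). (z,x)) ` Q'_set V E i v" for i
  note PM = P'_mem[OF dg mf m4 k V1 V2] and QM = Q'_mem[OF dg mf m4 k V1 V2]
  have finP: "finite (P'_set V E i v)" if "i \<in> {k..m-3}" for i
  proof (rule finite_subset[of _ "V \<times> V \<times> V"])
    show "P'_set V E i v \<subseteq> V \<times> V \<times> V"
    proof
      fix t assume "t \<in> P'_set V E i v"
      then obtain x y z where t: "t = (x,y,z)" "(x,y,z) \<in> P'_set V E i v" by (cases t) auto
      from PM[OF _ _ t(2)] that have "x = v" "y \<in> outN V E 1 v" "z \<in> outN V E (i+2) v" by auto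
      then show "t \<in> V \<times> V \<times> V" using t assms(4) by (auto simp: outN_iff)
    qed
  qed (use finV in auto)
  have finQ: "finite (Q'_set V E i v)" if "i \<in> {1..k}" for i
  proof (rule finite_subset[of _ "V \<times> V \<times> V"])
    show "Q'_set V E i v \<subseteq> V \<times> V \<times> V"
    proof
      fix t assume "t \<in> Q'_set V E i v"
      then obtain x y z where t: "t = (x,y,z)" "(x,y,z) \<in> Q'_set V E i v" by (cases t) auto
      from QM[OF _ _ t(2)] that have "y = v" "z \<in> outN V E (i+1) v" "x \<in> V2" by auto
      then show "t \<in> V \<times> V \<times> V" using t assms(4) by (auto simp: outN_iff V2)
    qed
  qed (use finV in auto)
  have cA: "card (A i) = p'_num V E i v" if "i \<in> {k..m-3}" for i
    unfolding A_def p'_num_def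
  proof (rule card_image, rule inj_onI)
    fix s t assume s: "s \<in> P'_set V E i v" and t: "t \<in> P'_set V E i v"
      and eq: "(case s of (x, y, z) \<Rightarrow> (y, z)) = (case t of (x, y, z) \<Rightarrow> (y, z))"
    obtain x y z where s': "s = (x,y,z)" by (cases s) auto
    obtain x' y' z' where t': "t = (x',y',z')" by (cases t) auto
    have "x = v" using PM[of i x y z] s s' that by auto
    moreover have "x' = v" using PM[of i x' y' z'] t t' that by auto
    ultimately show "s = t" using eq s' t' by auto
  qed
  have cB: "card (B i) = q'_num V E i v" if "i \<in> {1..k}" for i
    unfolding B_def q'_num_def
  proof (rule card_image, rule inj_onI)
    fix s t assume s: "s \<in> Q'_set V E i v" and t: "t \<in> Q'_set V E i v"
      and eq: "(case s of (x, y, z) \<Rightarrow> (z, x)) = (case t of (x, y, z) \<Rightarrow> (z, x))"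
    obtain x y z where s': "s = (x,y,z)" by (cases s) auto
    obtain x' y' z' where t': "t = (x',y',z')" by (cases t) auto
    have "y = v" using QM[of i x y z] s s' that by auto
    moreover have "y' = v" using QM[of i x' y' z'] t t' that by auto
    ultimately show "s = t" using eq s' t' by auto
  qed
  have Amem: "a \<in> outN V E 1 v \<and> b \<in> outN V E (i+2) v \<and> (a,b) \<in> T" if "(a,b) \<in> A i" "i \<in> {k..m-3}" for a b i
  proof -
    from that(1) obtain x where "(x,a,b) \<in> P'_set V E i v" unfolding A_def by auto
    from PM[OF _ _ this] that(2) show ?thesis unfolding T_def by auto
  qed
  have Bmem: "a \<in> outN V E (i+1) v \<and> (a,b) \<in> T" if "(a,b) \<in> B i" "i \<in> {1..k}" for a b i
  proof -
    from that(1) obtain y where "(b,y,a) \<in> Q'_set V E i v" unfolding B_def by auto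
    from QM[OF _ _ this] that(2) show ?thesis unfolding T_def by auto
  qed
  let ?UA = "\<Union>i\<in>{k..m-3}. A i" and ?UB = "\<Union>i\<in>{1..k}. B i"
  have cUA: "card ?UA = (\<Sum>i = k..m - 3. p'_num V E i v)"
  proof -
    have "card ?UA = (\<Sum>i = k..m - 3. card (A i))"
    proof (rule card_UN_disjoint)
      show "\<forall>i\<in>{k..m - 3}. finite (A i)" using finP unfolding A_def by auto
      show "\<forall>i\<in>{k..m - 3}. \<forall>j\<in>{k..m - 3}. i \<noteq> j \<longrightarrow> A i \<inter> A j = {}"
      proof (intro ballI impI)
        fix i j assume ij: "i \<in> {k..m-3}" "j \<in> {k..m-3}" "i \<noteq> j"
        show "A i \<inter> A j = {}"
        proof (rule ccontr)
          assume "A i \<inter> A j \<noteq> {}"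
          then obtain a b where "(a,b) \<in> A i" "(a,b) \<in> A j" by auto
          then have "b \<in> outN V E (i+2) v" "b \<in> outN V E (j+2) v" using Amem ij by blast+
          then show False using outN_unique ij by force
        qed
      qed
    qed simp
    then show ?thesis using cA by simp
  qed
  have cUB: "card ?UB = (\<Sum>i = 1..k. q'_num V E i v)"
  proof -
    have "card ?UB = (\<Sum>i = 1..k. card (B i))"
    proof (rule card_UN_disjoint)
      show "\<forall>i\<in>{1..k}. finite (B i)" using finQ unfolding B_def by auto
      show "\<forall>i\<in>{1..k}. \<forall>j\<in>{1..k}. i \<noteq> j \<longrightarrow> B i \<inter> B j = {}"
      proof (intro ballI impI)
        fix i j assume ij: "i \<in> {1..k}" "j \<in> {1..k}" "i \<noteq> j"
        show "B i \<inter> B j = {}"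
        proof (rule ccontr)
          assume "B i \<inter> B j \<noteq> {}"
          then obtain a b where "(a,b) \<in> B i" "(a,b) \<in> B j" by auto
          then have "a \<in> outN V E (i+1) v" "a \<in> outN V E (j+1) v" using Bmem ij by blast+
          then show False using outN_unique ij by force
        qed
      qed
    qed simp
    then show ?thesis using cB by simp
  qed
  have disj: "?UA \<inter> ?UB = {}"
  proof (rule ccontr)
    assume "?UA \<inter> ?UB \<noteq> {}"
    then obtain p where "p \<in> ?UA" "p \<in> ?UB" by blast
    then obtain a b i j where "(a,b) \<in> A i" "i \<in> {k..m-3}" "(a,b) \<in> B j" "j \<in> {1..k}"
      by (cases p) blast
    then have "a \<in> outN V E 1 v" "a \<in> outN V E (j+1) v" "j \<ge> 1" using Amem Bmem by auto
    then show False using outN_unique by force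
  qed
  have sub: "?UA \<union> ?UB \<subseteq> T" using Amem Bmem by auto
  have finU: "finite ?UA" "finite ?UB" using finite_subset[OF _ finT] sub by blast+
  have "s_num m V E k v = card (?UA \<union> ?UB)"
    unfolding s_num_def cUA[symmetric] cUB[symmetric] by (rule card_Un_disjoint[OF finU disj, symmetric])
  also have "\<dots> \<le> card T" by (rule card_mono[OF finT sub])
  finally have e3: "card T \<ge> s_num m V E k v" .
  show ?thesis using e1 e2 e3 unfolding T_def by blast
qed

end
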